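(* Let $\mathcal{M}=((X,\mathcal{C}),\mathcal{V})$ be a quasi-discrete closure model, $x\in X$, and $\phi_1,\phi_2$ SLCS formulas. Then $\mathcal{M},x\models\phi_1\,\mathcal{S}\,\phi_2$ (path-based semantics) if and only if there exists $A\subseteq X$ with $x\in A$ such that $\mathcal{M},y\models\phi_1$ for all $y\in A$ and $\mathcal{M},z\models\phi_2$ for all $z\in\mathcal{C}(A)\setminus A$.
   Context: A closure space is $(X,\mathcal{C})$ with $\mathcal{C}:\wp(X)\to\wp(X)$, $\mathcal{C}(\emptyset)=\emptyset$, $A\subseteq\mathcal{C}(A)$, $\mathcal{C}(A\cup B)=\mathcal{C}(A)\cup\mathcal{C}(B)$. It is quasi-discrete if there is $R\subseteq X\times X$ with $\mathcal{C}=\mathcal{C}_R$, where $\mathcal{C}_R(A)=A\cup\{x\mid\exists a\in A.(a,x)\in R\}$ (equivalently, $\mathcal{C}(A)=\bigcup_{a\in A}\mathcal{C}(\{a\})$ for all $A$). A function between closure spaces is continuous if $f(\mathcal{C}_1(A))\subseteq\mathcal{C}_2(f(A))$. Paths in a quasi-discrete space are continuous functions $p:(\mathbb{N},\mathcal{C}_\succ)\to(X,\mathcal{C})$ where $\succ=\{(n,n+1)\mid n\in\mathbb{N}\}$. A quasi-discrete closure model is $\mathcal{M}=((X,\mathcal{C}),\mathcal{V})$ with $(X,\mathcal{C})$ quasi-discrete and $\mathcal{V}:AP\to 2^X$. SLCS formulas: $\Phi::=a\mid\top\mid\lnot\Phi\mid\Phi\land\Phi\mid\mathcal{N}\Phi\mid\Phi\,\mathcal{S}\,\Phi\mid\Phi\rightsquigarrow\Phi$,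 with semantics: $x\models a$ iff $x\in\mathcal{V}(a)$; boolean connectives as usual; $x\models\mathcal{N}\phi$ iff $x\in\mathcal{C}(\{y\mid y\models\phi\})$; $x\models\phi_1\,\mathcal{S}\,\phi_2$ iff $x\models\phi_1$ and for every path $p$ with $p(0)=x$ and every $l\in\mathbb{N}$, if $p(l)\models\lnot\phi_1$ then there is $k$ with $0<k\le l$ and $p(k)\models\phi_2$; $x\models\phi_1\rightsquigarrow\phi_2$ iff $x\models\phi_2$ and there exist $y$, a path $p$ and $l$ with $p(0)=y$, $p(l)=x$, $y\models\phi_1$ and $p(i)\models\phi_2$ for all $0<i<l$. *)

theory Defs
  imports Main
begin

text \<open>Closure spaces: the carrier X is the universe of the type 'a.\<close>

definition closure_space :: "('a set \<Rightarrow> 'a set) \<Rightarrow> bool" where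
  "closure_space C \<longleftrightarrow> C {} = {} \<and> (\<forall>A. A \<subseteq> C A) \<and> (\<forall>A B. C (A \<union> B) = C A \<union> C B)"

definition closure_rel :: "('a \<times> 'a) set \<Rightarrow> 'a set \<Rightarrow> 'a set" where
  "closure_rel R A = A \<union> {x. \<exists>a\<in>A. (a, x) \<in> R}"

definition quasi_discrete :: "('a set \<Rightarrow> 'a set) \<Rightarrow> bool" where
  "quasi_discrete C \<longleftrightarrow> closure_space C \<and> (\<exists>R. C = closure_rel R)"

definition succ_rel :: "(nat \<times> nat) set" where
  "succ_rel = {(n, Suc n) | n. True}"

definition cont_closure :: "('a set \<Rightarrow> 'a set) \<Rightarrow> ('b set \<Rightarrow> 'b set) \<Rightarrow> ('a \<Rightarrow> 'b) \<Rightarrow> bool" where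
  "cont_closure C1 C2 f \<longleftrightarrow> (\<forall>A. f ` (C1 A) \<subseteq> C2 (f ` A))"

definition is_path :: "('a set \<Rightarrow> 'a set) \<Rightarrow> (nat \<Rightarrow> 'a) \<Rightarrow> bool" where
  "is_path C p \<longleftrightarrow> cont_closure (closure_rel succ_rel) C p"

datatype 'p slcs =
    Atom 'p
  | Top
  | Neg "'p slcs"
  | Conj "'p slcs" "'p slcs"
  | Near "'p slcs"
  | Surr "'p slcs" "'p slcs"
  | Reach "'p slcs" "'p slcs"

primrec sat :: "('a set \<Rightarrow> 'a set) \<Rightarrow> ('p \<Rightarrow> 'a set) \<Rightarrow> 'a \<Rightarrow> 'p slcs \<Rightarrow> bool" where
  "sat C V x (Atom a) \<longleftrightarrow> x \<in> V a"
| "sat C V x Top \<longleftrightarrow> True"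
| "sat C V x (Neg \<phi>) \<longleftrightarrow> \<not> sat C V x \<phi>"
| "sat C V x (Conj \<phi> \<psi>) \<longleftrightarrow> sat C V x \<phi> \<and> sat C V x \<psi>"
| "sat C V x (Near \<phi>) \<longleftrightarrow> x \<in> C {y. sat C V y \<phi>}"
| "sat C V x (Surr \<phi>1 \<phi>2) \<longleftrightarrow> sat C V x \<phi>1 \<and>
     (\<forall>p l. is_path C p \<and> p 0 = x \<and> \<not> sat C V (p l) \<phi>1 \<longrightarrow>
        (\<exists>k. 0 < k \<and> k \<le> l \<and> sat C V (p k) \<phi>2))"
| "sat C V x (Reach \<phi>1 \<phi>2) \<longleftrightarrow> sat C V x \<phi>2 \<and>
     (\<exists>y p l. is_path C p \<and> p 0 = y \<and> p l = x \<and> sat C V y \<phi>1 \<and>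
        (\<forall>i. 0 < i \<and> i < l \<longrightarrow> sat C V (p i) \<phi>2))"

end

theory Submission
  imports Defs
begin

lemma cr_succ: "closure_rel succ_rel A = A \<union> Suc ` A"
  unfolding closure_rel_def succ_rel_def by auto

lemma path_step:
  assumes "is_path (closure_rel R) p"
  shows "p (Suc n) = p n \<or> (p n, p (Suc n)) \<in> R"
proof -
  have "p ` closure_rel succ_rel {n} \<subseteq> closure_rel R (p ` {n})"
    using assms unfolding is_path_def cont_closure_def by blast
  moreover have "Suc n \<in> closure_rel succ_rel {n}" by (simp add: cr_succ)
  ultimately show ?thesis unfolding closure_rel_def by auto
qed

lemma path_intro:
  assumes "\<And>n. p (Suc n) = p n \<or> (p n, p (Suc n)) \<in> R"
  shows "is_path (closure_rel R) p"
  unfolding is_path_def cont_closure_def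
proof (intro allI subsetI)
  fix A y assume "y \<in> p ` closure_rel succ_rel A"
  then obtain m where m: "m \<in> A \<union> Suc ` A" "y = p m" by (auto simp: cr_succ)
  then show "y \<in> closure_rel R (p ` A)"
  proof (cases "m \<in> A")
    case True then show ?thesis using m unfolding closure_rel_def by auto
  next
    case False
    then obtain n where "n \<in> A" "m = Suc n" using m by auto
    then show ?thesis using m assms[of n] unfolding closure_rel_def by auto
  qed
qed

theorem theorem3p7:
  fixes C :: "'a set \<Rightarrow> 'a set" and V :: "'p \<Rightarrow> 'a set"
    and x :: 'a and \<phi>1 \<phi>2 :: "'p slcs"
  assumes "quasi_discrete C"
  shows "sat C V x (Surr \<phi>1 \<phi>2) \<longleftrightarrow>
    (\<exists>A. x \<in> A \<and> (\<forall>y\<in>A. sat C V y \<phi>1) \<and> (\<forall>z\<in>C A - A. sat C V z \<phi>2))"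
proof -
  obtain R where CR: "C = closure_rel R" using assms unfolding quasi_discrete_def by blast
  show ?thesis
  proof
    assume S: "sat C V x (Surr \<phi>1 \<phi>2)"
    define A where "A = {y. \<exists>p l. is_path C p \<and> p 0 = x \<and> p l = y \<and>
        (\<forall>k. 0 < k \<and> k \<le> l \<longrightarrow> \<not> sat C V (p k) \<phi>2)}"
    have xA: "x \<in> A" unfolding A_def
      by (rule CollectI, rule exI[of _ "\<lambda>_. x"], rule exI[of _ 0])
         (auto simp: CR intro: path_intro)
    have A1: "\<forall>y\<in>A. sat C V y \<phi>1"
    proof
      fix y assume "y \<in> A"
      then obtain p l where "is_path C p" "p 0 = x" "p l = y"
        "\<forall>k. 0 < k \<and> k \<le> l \<longrightarrow> \<not> sat C V (p k) \<phi>2" unfolding A_def by blast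
      then show "sat C V y \<phi>1" using S by auto
    qed
    have A2: "\<forall>z\<in>C A - A. sat C V z \<phi>2"
    proof
      fix z assume z: "z \<in> C A - A"
      then obtain a where a: "a \<in> A" "(a, z) \<in> R" unfolding CR closure_rel_def by auto
      then obtain p l where p: "is_path C p" "p 0 = x" "p l = a"
        "\<forall>k. 0 < k \<and> k \<le> l \<longrightarrow> \<not> sat C V (p k) \<phi>2" unfolding A_def by blast
      define q where "q = (\<lambda>n. if n \<le> l then p n else z)"
      have qp: "is_path C q" unfolding CR
      proof (rule path_intro)
        fix n
        show "q (Suc n) = q n \<or> (q n, q (Suc n)) \<in> R"
        proof (cases "Suc n \<le> l")
          case True then show ?thesis using path_step[of R p n] p(1) CR q_def by auto
        next
          case False
          then show ?thesis using a p(3) q_def by (cases "n = l") auto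
        qed
      qed
      show "sat C V z \<phi>2"
      proof (rule ccontr)
        assume "\<not> sat C V z \<phi>2"
        then have "\<forall>k. 0 < k \<and> k \<le> Suc l \<longrightarrow> \<not> sat C V (q k) \<phi>2"
          using p(4) q_def by (auto simp: le_Suc_eq)
        moreover have "q 0 = x" "q (Suc l) = z" using p(2) q_def by auto
        ultimately have "z \<in> A" using qp unfolding A_def by blast
        with z show False by blast
      qed
    qed
    show "\<exists>A. x \<in> A \<and> (\<forall>y\<in>A. sat C V y \<phi>1) \<and> (\<forall>z\<in>C A - A. sat C V z \<phi>2)"
      using xA A1 A2 by blast
  next
    assume "\<exists>A. x \<in> A \<and> (\<forall>y\<in>A. sat C V y \<phi>1) \<and> (\<forall>z\<in>C A - A. sat C V z \<phi>2)"
    then obtain A where xA: "x \<in> A" and A1: "\<forall>y\<in>A. sat C V y \<phi>1"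
      and A2: "\<forall>z\<in>C A - A. sat C V z \<phi>2" by blast
    have "\<exists>k. 0 < k \<and> k \<le> l \<and> sat C V (p k) \<phi>2"
      if p: "is_path C p" "p 0 = x" "\<not> sat C V (p l) \<phi>1" for p l
    proof (rule ccontr)
      assume N: "\<not> (\<exists>k. 0 < k \<and> k \<le> l \<and> sat C V (p k) \<phi>2)"
      have "k \<le> l \<Longrightarrow> p k \<in> A" for k
      proof (induction k)
        case 0 then show ?case using p xA by simp
      next
        case (Suc k)
        then have pk: "p k \<in> A" by simp
        have "p (Suc k) \<in> C A"
          using path_step[of R p k] p(1) pk CR unfolding closure_rel_def by auto
        moreover have "\<not> sat C V (p (Suc k)) \<phi>2" using N Suc.prems by auto
        ultimately show ?case using A2 by blast
      qed
      then have "p l \<in> A" by simp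
      then show False using A1 p(3) by blast
    qed
    then show "sat C V x (Surr \<phi>1 \<phi>2)" using xA A1 by auto
  qed
qed

end
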